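(* For unrestricted (arbitrary nonnegative) valuation functions in one-sided matching with $n$ agents and $n$ items, every deterministic matching algorithm that makes at most $k\ge1$ value queries per agent has distortion $\Omega\!\left(\frac1k n^{1/k}\right)$. This holds even on instances in which all agents have the same ranking of the items.
   Context: One-sided matching: there is a set $N$ of $n$ agents and a set $A$ of $n$ items. Each agent $i$ has a valuation function $v_i:A\to\mathbb{R}_{\ge0}$. A deterministic matching algorithm making $k$ queries per agent receives the profile of strict rankings $\succ_i$ consistent with the values (if $a\succ_i b$ then $v_i(a)\ge v_i(b)$). It adaptively makes value queries $(i,j)\mapsto v_i(j)$, at most $k$ per agent, and outputs a bijection $Y:N\to A$. Its distortion is the supremum over valuation profiles of $\max_Z\sum_i v_i(z_i)/\sum_i v_i(y_i)$. *)

theory Defs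
  imports "HOL-Analysis.Analysis"
begin

text \<open>Agents and items are both indexed by 0..<n.
  A valuation profile is v :: nat => nat => real, v i j = value of agent i for item j.
  A ranking profile is rho :: nat => nat => nat, where rho i r is the item that agent i
  ranks at position r (position 0 = most preferred).\<close>

text \<open>An adaptive deterministic query algorithm (after seeing the rankings) is a decision
  tree: either output a matching, or query the value v i j and continue depending on the
  answer.\<close>

datatype qtree = Output "nat \<Rightarrow> nat" | Query nat nat "real \<Rightarrow> qtree"

primrec run :: "qtree \<Rightarrow> (nat \<Rightarrow> nat \<Rightarrow> real) \<Rightarrow> nat \<Rightarrow> nat" where
  "run (Output Y) v = Y"
| "run (Query i j f) v = run (f (v i j)) v"

primrec trace :: "qtree \<Rightarrow> (nat \<Rightarrow> nat \<Rightarrow> real) \<Rightarrow> (nat \<times> nat) list" where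
  "trace (Output Y) v = []"
| "trace (Query i j f) v = (i, j) # trace (f (v i j)) v"

definition is_matching :: "nat \<Rightarrow> (nat \<Rightarrow> nat) \<Rightarrow> bool" where
  "is_matching n Y \<longleftrightarrow> bij_betw Y {..<n} {..<n}"

definition is_ranking_profile :: "nat \<Rightarrow> (nat \<Rightarrow> nat \<Rightarrow> nat) \<Rightarrow> bool" where
  "is_ranking_profile n \<rho> \<longleftrightarrow> (\<forall>i<n. bij_betw (\<rho> i) {..<n} {..<n})"

definition valid_instance :: "nat \<Rightarrow> (nat \<Rightarrow> nat \<Rightarrow> nat) \<Rightarrow> (nat \<Rightarrow> nat \<Rightarrow> real) \<Rightarrow> bool" where
  "valid_instance n \<rho> v \<longleftrightarrow> is_ranking_profile n \<rho>
     \<and> (\<forall>i<n. \<forall>j<n. 0 \<le> v i j)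
     \<and> (\<forall>i<n. \<forall>r s. r < s \<and> s < n \<longrightarrow> v i (\<rho> i s) \<le> v i (\<rho> i r))"

definition same_ranking :: "nat \<Rightarrow> (nat \<Rightarrow> nat \<Rightarrow> nat) \<Rightarrow> bool" where
  "same_ranking n \<rho> \<longleftrightarrow> (\<forall>i<n. \<forall>r<n. \<rho> i r = \<rho> 0 r)"

definition welfare :: "nat \<Rightarrow> (nat \<Rightarrow> nat \<Rightarrow> real) \<Rightarrow> (nat \<Rightarrow> nat) \<Rightarrow> real" where
  "welfare n v Y = (\<Sum>i<n. v i (Y i))"

definition opt_welfare :: "nat \<Rightarrow> (nat \<Rightarrow> nat \<Rightarrow> real) \<Rightarrow> real" where
  "opt_welfare n v = Max {welfare n v Z | Z. is_matching n Z}"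

text \<open>An algorithm maps the ranking profile to a decision tree.\<close>
definition k_query_algorithm ::
  "nat \<Rightarrow> nat \<Rightarrow> ((nat \<Rightarrow> nat \<Rightarrow> nat) \<Rightarrow> qtree) \<Rightarrow> bool" where
  "k_query_algorithm n k A \<longleftrightarrow>
     (\<forall>\<rho> v. valid_instance n \<rho> v \<longrightarrow>
        (\<forall>(i, j) \<in> set (trace (A \<rho>) v). i < n \<and> j < n)
      \<and> (\<forall>i<n. length (filter (\<lambda>q. fst q = i) (trace (A \<rho>) v)) \<le> k)
      \<and> is_matching n (run (A \<rho>) v))"

definition ratio :: "nat \<Rightarrow> (nat \<Rightarrow> nat \<Rightarrow> real) \<Rightarrow> (nat \<Rightarrow> nat) \<Rightarrow> ereal" where
  "ratio n v Y = (if welfare n v Y > 0 then ereal (opt_welfare n v / welfare n v Y)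
                  else if opt_welfare n v > 0 then \<infinity> else 1)"

definition distortion_on ::
  "((nat \<Rightarrow> nat \<Rightarrow> nat) \<Rightarrow> bool) \<Rightarrow> nat \<Rightarrow> ((nat \<Rightarrow> nat \<Rightarrow> nat) \<Rightarrow> qtree) \<Rightarrow> ereal" where
  "distortion_on P n A =
     (SUP x \<in> {(\<rho>, v). valid_instance n \<rho> v \<and> P \<rho>}. ratio n (snd x) (run (A (fst x)) (snd x)))"

end

theory Submission imports Defs "HOL-Library.Log_Nat" begin

lemma run_cong: "(\<forall>(i,j)\<in>set (trace t v). w i j = v i j) \<Longrightarrow> run t w = run t v"
  by (induction t) auto

lemma extend_matching:
  assumes "A \<subseteq> {..<n}" "inj_on h A" "h ` A \<subseteq> {..<n}"
  shows "\<exists>Z. is_matching n Z \<and> (\<forall>i\<in>A. Z i = h i)"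
proof -
  have fA: "finite A" using assms(1) finite_subset by blast
  have c1: "card ({..<n} - A) = n - card A" using assms(1) fA by (simp add: card_Diff_subset)
  have c2: "card ({..<n} - h ` A) = n - card A" using assms fA
    by (simp add: card_Diff_subset card_image)
  obtain g where g: "bij_betw g ({..<n} - A) ({..<n} - h ` A)"
    using finite_same_card_bij[of "{..<n} - A" "{..<n} - h ` A"] c1 c2 by auto
  have hb: "bij_betw h A (h ` A)" using assms(2) by (simp add: bij_betw_imageI)
  have "bij_betw (\<lambda>x. if x \<in> A then h x else g x) (A \<union> ({..<n} - A)) (h ` A \<union> ({..<n} - h ` A))"
    by (rule bij_betw_disjoint_Un[OF hb g]) auto
  moreover have "A \<union> ({..<n} - A) = {..<n}" "h ` A \<union> ({..<n} - h ` A) = {..<n}" using assms by auto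
  ultimately show ?thesis unfolding is_matching_def by (intro exI[of _ "\<lambda>x. if x \<in> A then h x else g x"]) auto
qed

lemma opt_ge:
  assumes "is_matching n Z"
  shows "welfare n v Z \<le> opt_welfare n v"
proof -
  have sub: "{welfare n v Z |Z. is_matching n Z} \<subseteq> (\<lambda>Z. welfare n v Z) ` ({..<n} \<rightarrow>\<^sub>E {..<n})"
  proof
    fix x assume "x \<in> {welfare n v Z |Z. is_matching n Z}"
    then obtain Z where Z: "is_matching n Z" "x = welfare n v Z" by auto
    have "restrict Z {..<n} \<in> {..<n} \<rightarrow>\<^sub>E {..<n}"
      using Z(1) unfolding is_matching_def bij_betw_def by auto
    moreover have "welfare n v (restrict Z {..<n}) = x" using Z(2) unfolding welfare_def by simp
    ultimately show "x \<in> (\<lambda>Z. welfare n v Z) ` ({..<n} \<rightarrow>\<^sub>E {..<n})" by force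
  qed
  have "finite {welfare n v Z |Z. is_matching n Z}"
    by (rule finite_subset[OF sub]) (simp add: finite_PiE)
  then show ?thesis unfolding opt_welfare_def using assms by (intro Max_ge) auto
qed

lemma ratio_ge_1:
  assumes "is_matching n Y"
  shows "1 \<le> ratio n v Y"
  using opt_ge[OF assms, of v] unfolding ratio_def by auto

lemma geo_sum:
  fixes L :: nat assumes "1 < L"
  shows "(\<Sum>j<L^m. 1 / real L ^ floorlog L j) \<le> real m + 1"
proof (induction m)
  case 0
  then show ?case by (simp add: floorlog_def)
next
  case (Suc m)
  have le: "L^m \<le> L^Suc m" using assms by simp
  have "(\<Sum>j\<in>{L^m..<L^Suc m}. 1 / real L ^ floorlog L j) = (\<Sum>j\<in>{L^m..<L^Suc m}. 1 / real L ^ Suc m)"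
  proof (rule sum.cong)
    fix j assume "j \<in> {L^m..<L^Suc m}"
    then have "floorlog L j = Suc m"
      using floorlog_ge_SucI[of L m j] floorlog_leI[of j L "Suc m"] assms by auto
    then show "1 / real L ^ floorlog L j = 1 / real L ^ Suc m" by simp
  qed simp
  also have "\<dots> = real (L^Suc m - L^m) / real L ^ Suc m" by simp
  also have "\<dots> \<le> 1" using assms le by (simp add: of_nat_diff)
  finally have h: "(\<Sum>j\<in>{L^m..<L^Suc m}. 1 / real L ^ floorlog L j) \<le> 1" .
  have "(\<Sum>j<L^Suc m. 1 / real L ^ floorlog L j) = (\<Sum>j<L^m. 1 / real L ^ floorlog L j) + (\<Sum>j\<in>{L^m..<L^Suc m}. 1 / real L ^ floorlog L j)"
    unfolding lessThan_atLeast0 by (rule sum.atLeastLessThan_concat[symmetric]) (use le in auto)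
  then show ?case using Suc h by simp
qed

lemma core:
  fixes n k L :: nat and A
  assumes k1: "1 \<le> k" and L2: "2 \<le> L" and nL: "(k+2) * L^k \<le> n"
    and alg: "k_query_algorithm n k A"
  shows "ereal ((real L - 1) / (real k + 1)) \<le> distortion_on (same_ranking n) n A"
proof -
  define \<rho> :: "nat \<Rightarrow> nat \<Rightarrow> nat" where "\<rho> = (\<lambda>i r. r)"
  define f where "f = (\<lambda>j. if j < L^(k-1) then 1 / real L ^ floorlog L j else 1 / real n)"
  define v0 where "v0 = (\<lambda>(i::nat) j. f j)"
  define T where "T = trace (A \<rho>) v0"
  define Y where "Y = run (A \<rho>) v0"
  define Q where "Q = (\<lambda>i. {j. (i,j) \<in> set T})"
  define U where "U = (\<lambda>i j. Min (insert (real L) (f ` {q \<in> Q i. q \<le> j})))"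
  define v where "v = (\<lambda>i j. if j < Y i then U i j else f j)"
  define zone where "zone = (\<lambda>j. min k (floorlog L j))"
  have L1: "1 < L" using L2 by simp
  have Lk_le: "L^(k-1) \<le> L^k" using L1 by (intro power_increasing) auto
  have "L^k \<le> (k+2) * L^k" by simp
  then have Lkn: "L^k \<le> n" using nL by linarith
  have Lkpos: "1 \<le> L^k" using L1 by simp
  have Lk1pos: "1 \<le> L^(k-1)" using L1 by simp
  have n1: "1 \<le> n" using Lkn Lkpos by linarith
  have f_pos: "0 < f j" for j using L1 n1 unfolding f_def by auto
  have f_le1: "f j \<le> 1" for j using L1 n1 unfolding f_def by auto
  have f_low: "1 / real L ^ m \<le> f q" if "q < L^m" "m \<le> k-1" for q m
  proof -
    have fl: "floorlog L q \<le> m" using floorlog_leI[of q L m] that L1 by auto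
    have "q < L^(k-1)" using that(1) power_increasing[OF that(2), of L] L1 by linarith
    then have "f q = 1 / real L ^ floorlog L q" unfolding f_def by simp
    moreover have "real L ^ floorlog L q \<le> real L ^ m" using fl L1 by (intro power_increasing) auto
    ultimately show ?thesis using L1 by (auto intro!: frac_le)
  qed
  have f_mono: "f j \<le> f i" if "i \<le> j" for i j
  proof (cases "j < L^(k-1)")
    case True
    then have "i < L^(k-1)" using that by linarith
    moreover have "real L ^ floorlog L i \<le> real L ^ floorlog L j"
      using floorlog_mono[OF that] L1 by (intro power_increasing) auto
    ultimately show ?thesis using True L1 unfolding f_def by (auto intro!: frac_le)
  next
    case False
    show ?thesis
    proof (cases "i < L^(k-1)")
      case True
      have "floorlog L i \<le> k-1" using floorlog_leI[of i L "k-1"] True L1 by auto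
      then have "L ^ floorlog L i \<le> L^(k-1)" using L1 by (intro power_increasing) auto
      then have "real L ^ floorlog L i \<le> real n" using Lk_le Lkn
        by (metis of_nat_le_iff of_nat_power order_trans)
      then show ?thesis using True False L1 unfolding f_def by (auto intro!: frac_le)
    next
      case False
      then show ?thesis using \<open>\<not> j < L^(k-1)\<close> unfolding f_def by simp
    qed
  qed
  have rank: "is_ranking_profile n \<rho>" unfolding is_ranking_profile_def \<rho>_def
    by (simp add: bij_betw_id[unfolded id_def])
  have same: "same_ranking n \<rho>" unfolding same_ranking_def \<rho>_def by simp
  have valid0: "valid_instance n \<rho> v0" unfolding valid_instance_def v0_def
    using rank f_pos f_mono by (auto simp: \<rho>_def less_imp_le)
  have T_ok: "\<forall>(i, j) \<in> set T. i < n \<and> j < n"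
    and T_len: "\<forall>i<n. length (filter (\<lambda>q. fst q = i) T) \<le> k"
    and Y_match: "is_matching n Y"
    using alg valid0 unfolding k_query_algorithm_def T_def Y_def by blast+
  have Q_fin: "finite (Q i)" for i
    by (rule finite_subset[of _ "snd ` set T"]) (force simp: Q_def)+
  have Q_card: "card (Q i) \<le> k" if "i < n" for i
  proof -
    have "Q i = snd ` set (filter (\<lambda>q. fst q = i) T)" unfolding Q_def by force
    then have "card (Q i) \<le> card (set (filter (\<lambda>q. fst q = i) T))" by (simp add: card_image_le)
    also have "\<dots> \<le> length (filter (\<lambda>q. fst q = i) T)" by (rule card_length)
    finally show ?thesis using T_len that order_trans by blast
  qed
  have U_fin: "finite (insert (real L) (f ` {q \<in> Q i. q \<le> j}))" for i j
    using Q_fin by auto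
  have U_ge: "f j \<le> U i j" for i j
    unfolding U_def using U_fin f_le1[of j] L1 f_mono by (auto simp: Min_ge_iff)
  have U_at: "U i j = f j" if "j \<in> Q i" for i j
  proof -
    have "U i j \<le> f j" unfolding U_def using U_fin that by (intro Min_le) auto
    then show ?thesis using U_ge by (simp add: antisym)
  qed
  have U_anti: "U i s \<le> U i r" if "r \<le> s" for i r s
    unfolding U_def using U_fin that by (intro Min_antimono) auto
  have U_lb: "c \<le> U i j" if "c \<le> real L" "\<forall>q\<in>Q i. q \<le> j \<longrightarrow> c \<le> f q" for c i j
    unfolding U_def using U_fin that by (auto simp: Min_ge_iff)
  have v_pos: "0 < v i j" for i j
    unfolding v_def using U_ge f_pos by (auto intro: less_le_trans)
  have agree: "\<forall>(i,j)\<in>set T. v i j = v0 i j"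
    unfolding v_def v0_def using U_at by (auto simp: Q_def)
  have runv: "run (A \<rho>) v = Y" unfolding Y_def T_def using run_cong agree T_def by blast
  have valid: "valid_instance n \<rho> v"
    unfolding valid_instance_def
  proof (intro conjI rank allI impI)
    fix i j show "0 \<le> v i j" using v_pos less_imp_le by blast
  next
    fix i r s assume "r < s \<and> s < n"
    then have rs: "r \<le> s" by simp
    show "v i (\<rho> i s) \<le> v i (\<rho> i r)"
      unfolding \<rho>_def v_def using U_anti[OF rs] f_mono[OF rs] U_ge[of r i] rs by auto
  qed
  have zone_le: "zone j \<le> k" for j unfolding zone_def by simp
  have zone0: "zone j = 0 \<longleftrightarrow> j = 0" for j
    unfolding zone_def using k1 L1 floorlog_eq_zero_iff[of L j] by auto
  have zone_lt: "q < L^(t-1)" if "1 \<le> t" "t \<le> k" "zone q < t" for q t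
  proof -
    have "floorlog L q \<le> t - 1" using that unfolding zone_def by auto
    then show ?thesis using floorlog_leD L1 by blast
  qed
  have zone_mono: "zone i \<le> zone j" if "i \<le> j" for i j
    unfolding zone_def by (intro min.mono order_refl floorlog_mono that)
  have zone_upper: "zone j \<le> t" if "j < L^t" for j t
    unfolding zone_def using floorlog_leI[of j L t] that L1 by auto
  have Ybij: "bij_betw Y {..<n} {..<n}" using Y_match unfolding is_matching_def .
  have Yinj: "inj_on Y {..<n}" using Ybij bij_betw_def by blast
  define S where "S = {i. i < n \<and> L^(k-1) \<le> Y i}"
  have S_sub: "S \<subseteq> {..<n}" unfolding S_def by auto
  have "Y ` S = {L^(k-1)..<n}"
  proof
    show "Y ` S \<subseteq> {L^(k-1)..<n}" unfolding S_def using Ybij bij_betw_apply by fastforce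
  next
    show "{L^(k-1)..<n} \<subseteq> Y ` S"
    proof
      fix j assume j: "j \<in> {L^(k-1)..<n}"
      then have "j \<in> Y ` {..<n}" using Ybij bij_betw_imp_surj_on by fastforce
      then obtain i where "i < n" "j = Y i" by auto
      then show "j \<in> Y ` S" using j unfolding S_def by auto
    qed
  qed
  moreover have "inj_on Y S" using Yinj S_sub inj_on_subset by blast
  ultimately have cardS: "card S = n - L^(k-1)" by (metis card_atLeastLessThan card_image)
  have "(k+2) * L^k = (k+1) * L^k + L^k" by simp
  then have cardS2: "(k+1) * L^k \<le> card S" using cardS nL Lk_le by linarith
  define Miss where "Miss = (\<lambda>t. {i \<in> S. \<forall>q\<in>Q i. zone q \<noteq> t})"
  have S_cov: "S \<subseteq> (\<Union>t\<in>{..k}. Miss t)"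
  proof
    fix i assume iS: "i \<in> S"
    have "card (zone ` Q i) \<le> card (Q i)" using Q_fin card_image_le by blast
    also have "\<dots> \<le> k" using Q_card iS unfolding S_def by auto
    finally have "card (zone ` Q i) < card {..k}" by simp
    then have "zone ` Q i \<noteq> {..k}" by auto
    moreover have "zone ` Q i \<subseteq> {..k}" using zone_le by auto
    ultimately obtain t where "t \<le> k" "t \<notin> zone ` Q i" by auto
    then have "i \<in> Miss t" using iS unfolding Miss_def by auto
    with \<open>t \<le> k\<close> show "i \<in> (\<Union>t\<in>{..k}. Miss t)" by blast
  qed
  have fin_Miss: "finite (Miss t)" for t
    using S_sub unfolding Miss_def by (auto intro: finite_subset)
  have "\<exists>t\<le>k. L^k \<le> card (Miss t)"
  proof (rule ccontr)
    assume nt: "\<not> ?thesis"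
    have lt: "card (Miss t) \<le> L^k - 1" if "t \<le> k" for t
    proof -
      have "card (Miss t) < L^k" using nt that leD by (auto simp: not_le)
      then show ?thesis by simp
    qed
    have "card S \<le> card (\<Union>t\<in>{..k}. Miss t)"
      using S_cov fin_Miss by (intro card_mono) auto
    also have "\<dots> \<le> (\<Sum>t\<le>k. card (Miss t))" by (rule card_UN_le) simp
    also have "\<dots> \<le> (\<Sum>t\<le>k. L^k - 1)" using lt by (intro sum_mono) auto
    also have "\<dots> = (k+1) * (L^k - 1)" by simp
    also have "\<dots> < (k+1) * L^k" using Lkpos by (intro mult_strict_left_mono) auto
    finally show False using cardS2 by linarith
  qed
  then obtain t where t: "t \<le> k" "L^k \<le> card (Miss t)" by blast
  have gain: "real (card B) * c \<le> opt_welfare n v"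
    if asm: "B \<subseteq> {..<n}" "inj_on h B" "h ` B \<subseteq> {..<n}" "\<forall>i\<in>B. c \<le> v i (h i)" for B h c
  proof -
    obtain Z where Z: "is_matching n Z" "\<forall>i\<in>B. Z i = h i"
      using extend_matching[OF asm(1-3)] by blast
    have finB: "finite B" using that(1) finite_subset by blast
    have "real (card B) * c = (\<Sum>i\<in>B. c)" by simp
    also have "\<dots> \<le> (\<Sum>i\<in>B. v i (Z i))" using that(4) Z(2) by (intro sum_mono) auto
    also have "\<dots> \<le> (\<Sum>i<n. v i (Z i))" using that(1) v_pos
      by (intro sum_mono2) (auto intro: less_imp_le)
    also have "\<dots> \<le> opt_welfare n v" using opt_ge[OF Z(1)] unfolding welfare_def .
    finally show ?thesis .
  qed
  have opt: "real L - 1 \<le> opt_welfare n v"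
  proof (cases "t = 0")
    case True
    have "0 < card (Miss t)" using t Lkpos by linarith
    then have "Miss t \<noteq> {}" by auto
    then obtain i where i: "i \<in> Miss 0" using True by auto
    have iS: "i \<in> S" "\<forall>q\<in>Q i. zone q \<noteq> 0" using i unfolding Miss_def by auto
    have "0 < Y i" using iS Lk1pos unfolding S_def by auto
    moreover have e: "{q \<in> Q i. q \<le> 0} = {}" using iS(2) zone0 by auto
    moreover have "U i 0 = real L" unfolding U_def e by simp
    ultimately have "v i 0 = real L" unfolding v_def by simp
    then have "real (card {i}) * real L \<le> opt_welfare n v"
      using iS S_sub by (intro gain[of "{i}" "\<lambda>_. 0"]) auto
    then show ?thesis by simp
  next
    case False
    show ?thesis
    proof (cases "t < k")
      case True
      define B where "B = {L^(t-1)..<L^t}"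
      have Lt: "L^t \<le> L^k" using True L1 by (intro power_increasing) auto
      have Lt1: "L^t \<le> L^(k-1)" using True L1 by (intro power_increasing) auto
      have cB: "card B = L^t - L^(t-1)" unfolding B_def by simp
      then have "card B \<le> card (Miss t)" using Lt t by linarith
      then obtain A' where A': "A' \<subseteq> Miss t" "card A' = card B" "finite A'"
        by (meson obtain_subset_with_card_n)
      obtain h where h: "bij_betw h A' B" using finite_same_card_bij[of A' B] A' B_def by auto
      have "real (card A') * (1 / real L ^ (t-1)) \<le> opt_welfare n v"
      proof (rule gain)
        show "A' \<subseteq> {..<n}" using A'(1) S_sub unfolding Miss_def by auto
        show "inj_on h A'" using h bij_betw_def by blast
        have "h ` A' = B" using h by (simp add: bij_betw_def)
        moreover have "B \<subseteq> {..<n}"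
        proof
          fix j assume "j \<in> B"
          then have "j < L^t" unfolding B_def by simp
          then show "j \<in> {..<n}" using Lt Lkn by simp
        qed
        ultimately show "h ` A' \<subseteq> {..<n}" by simp
        show "\<forall>i\<in>A'. 1 / real L ^ (t-1) \<le> v i (h i)"
        proof
          fix i assume iA: "i \<in> A'"
          have hi: "h i \<in> B" by (rule bij_betw_apply[OF h iA])
          have iM: "i \<in> Miss t" using iA A'(1) by blast
          have iS: "i \<in> S" "\<forall>q\<in>Q i. zone q \<noteq> t" using iM unfolding Miss_def by auto
          have "h i < L^t" using hi unfolding B_def by simp
          moreover have "L^(k-1) \<le> Y i" using iS(1) unfolding S_def by simp
          ultimately have "h i < Y i" using Lt1 by linarith
          then have "v i (h i) = U i (h i)" unfolding v_def by simp
          moreover have "1 / real L ^ (t-1) \<le> U i (h i)"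
          proof (rule U_lb)
            have "1 / real L ^ (t-1) \<le> 1" using L1 by simp
            then show "1 / real L ^ (t-1) \<le> real L" using L1 by linarith
            show "\<forall>q\<in>Q i. q \<le> h i \<longrightarrow> 1 / real L ^ (t - 1) \<le> f q"
            proof (intro ballI impI)
              fix q assume q: "q \<in> Q i" "q \<le> h i"
              have hiL: "h i < L^t" using hi unfolding B_def by simp
              have "zone q \<le> t" using zone_mono[OF q(2)] zone_upper[OF hiL] by linarith
              moreover have "zone q \<noteq> t" using iS(2) q(1) by blast
              ultimately have zq: "zone q < t" by linarith
              have t1: "1 \<le> t" "t \<le> k" using \<open>t \<noteq> 0\<close> \<open>t < k\<close> by auto
              have "q < L^(t-1)" by (rule zone_lt[OF t1 zq])
              moreover have "t - 1 \<le> k - 1" using t1 by linarith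
              ultimately show "1 / real L ^ (t - 1) \<le> f q" by (rule f_low)
            qed
          qed
          ultimately show "1 / real L ^ (t-1) \<le> v i (h i)" by simp
        qed
      qed
      moreover have "real (card A') * (1 / real L ^ (t-1)) = real L - 1"
      proof -
        obtain s where s: "t = Suc s" using False by (cases t) auto
        have "L^s \<le> L^t" using s L1 by simp
        then have "real (card A') = real L * real L ^ s - real L ^ s" using A'(2) cB s by (simp add: of_nat_diff)
        then show ?thesis using s L1 by (simp add: field_simps)
      qed
      ultimately show ?thesis by simp
    next
      case False2: False
      then have tk: "t = k" using t by simp
      define A' where "A' = {i \<in> Miss k. L^(k-1) < Y i}"
      have "Miss k \<subseteq> A' \<union> {i \<in> S. Y i = L^(k-1)}" unfolding A'_def Miss_def S_def by auto
      then have "card (Miss k) \<le> card (A' \<union> {i \<in> S. Y i = L^(k-1)})"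
        using fin_Miss S_sub by (intro card_mono) (auto simp: A'_def intro: finite_subset)
      also have "\<dots> \<le> card A' + card {i \<in> S. Y i = L^(k-1)}" by (rule card_Un_le)
      finally have c1: "card (Miss k) \<le> card A' + card {i \<in> S. Y i = L^(k-1)}" .
      have c2: "card {i \<in> S. Y i = L^(k-1)} \<le> 1"
      proof -
        have "finite {i \<in> S. Y i = L^(k-1)}" using S_sub by (auto intro: finite_subset)
        moreover have "\<forall>a\<in>{i \<in> S. Y i = L^(k-1)}. \<forall>b\<in>{i \<in> S. Y i = L^(k-1)}. a = b"
        proof (intro ballI)
          fix a b assume a: "a \<in> {i \<in> S. Y i = L^(k-1)}" and b: "b \<in> {i \<in> S. Y i = L^(k-1)}"
          then have "Y a = Y b" "a \<in> {..<n}" "b \<in> {..<n}" using S_sub by auto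
          then show "a = b" using inj_onD[OF Yinj] by blast
        qed
        ultimately have "card {i \<in> S. Y i = L^(k-1)} \<le> Suc 0" using card_le_Suc0_iff_eq by blast
        then show ?thesis by simp
      qed
      have "L^k \<le> card (Miss k)" using t(2) tk by simp
      then have cA: "L^k - 1 \<le> card A'" using c1 c2 by linarith
      have "real (card A') * (1 / real L ^ (k-1)) \<le> opt_welfare n v"
      proof (rule gain[of _ "\<lambda>i. Y i - 1"])
        show "A' \<subseteq> {..<n}" using S_sub unfolding A'_def Miss_def by blast
        show "inj_on (\<lambda>i. Y i - 1) A'"
        proof
          fix a b assume ab: "a \<in> A'" "b \<in> A'" "Y a - 1 = Y b - 1"
          have "0 < Y a" "0 < Y b" using ab(1,2) unfolding A'_def by auto
          then have "Y a = Y b" using ab(3) by linarith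
          moreover have "a \<in> {..<n}" "b \<in> {..<n}" using ab(1,2) S_sub unfolding A'_def Miss_def by auto
          ultimately show "a = b" using inj_onD[OF Yinj] by blast
        qed
        show "(\<lambda>i. Y i - 1) ` A' \<subseteq> {..<n}"
        proof
          fix j assume "j \<in> (\<lambda>i. Y i - 1) ` A'"
          then obtain i where i: "i \<in> A'" "j = Y i - 1" by blast
          then have "i \<in> {..<n}" using S_sub unfolding A'_def Miss_def by auto
          then have "Y i \<in> {..<n}" by (rule bij_betw_apply[OF Ybij])
          then show "j \<in> {..<n}" using i by simp
        qed
        show "\<forall>i\<in>A'. 1 / real L ^ (k-1) \<le> v i (Y i - 1)"
        proof
          fix i assume iA: "i \<in> A'"
          have iS: "i \<in> S" "\<forall>q\<in>Q i. zone q \<noteq> k" "L^(k-1) < Y i" using iA unfolding A'_def Miss_def by auto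
          then have "v i (Y i - 1) = U i (Y i - 1)" unfolding v_def by simp
          moreover have "1 / real L ^ (k-1) \<le> U i (Y i - 1)"
          proof (rule U_lb)
            have "1 / real L ^ (k-1) \<le> 1" using L1 by simp
            then show "1 / real L ^ (k-1) \<le> real L" using L1 by linarith
            show "\<forall>q\<in>Q i. q \<le> Y i - 1 \<longrightarrow> 1 / real L ^ (k - 1) \<le> f q"
            proof (intro ballI impI)
              fix q assume q: "q \<in> Q i" "q \<le> Y i - 1"
              have "zone q \<noteq> k" using iS(2) q(1) by blast
              then have zq: "zone q < k" using zone_le[of q] by linarith
              have "q < L^(k-1)" by (rule zone_lt[OF k1 order_refl zq])
              then show "1 / real L ^ (k - 1) \<le> f q" by (rule f_low) simp
            qed
          qed
          ultimately show "1 / real L ^ (k-1) \<le> v i (Y i - 1)" by simp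
        qed
      qed
      moreover have "real L - 1 \<le> real (card A') * (1 / real L ^ (k-1))"
      proof -
        obtain s where s: "k = Suc s" using k1 by (cases k) auto
        have "real L ^ k - 1 \<le> real (card A')" using cA Lkpos
          by (metis of_nat_1 of_nat_diff of_nat_le_iff of_nat_power)
        then have "(real L ^ k - 1) / real L ^ s \<le> real (card A') / real L ^ s"
          using L1 by (intro divide_right_mono) auto
        moreover have "(real L ^ k - 1) / real L ^ s = real L - 1 / real L ^ s"
          using s L1 by (simp add: field_simps)
        moreover have "1 / real L ^ s \<le> 1" using L1 by simp
        ultimately show ?thesis using s by simp
      qed
      ultimately show ?thesis by simp
    qed
  qed
  have W: "welfare n v Y = (\<Sum>j<n. f j)"
  proof -
    have "welfare n v Y = (\<Sum>i<n. f (Y i))" unfolding welfare_def v_def by simp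
    also have "\<dots> = (\<Sum>j<n. f j)" by (rule sum.reindex_bij_betw[OF Ybij])
    finally show ?thesis .
  qed
  have "0 \<in> {..<n}" using n1 by simp
  then have ne: "{..<n} \<noteq> {}" by blast
  have Wpos: "0 < welfare n v Y" unfolding W using f_pos ne by (intro sum_pos) auto
  have Wle: "welfare n v Y \<le> real k + 1"
  proof -
    have split: "(\<Sum>j<n. f j) = (\<Sum>j<L^(k-1). f j) + (\<Sum>j\<in>{L^(k-1)..<n}. f j)"
      unfolding lessThan_atLeast0 by (rule sum.atLeastLessThan_concat[symmetric]) (use Lk_le Lkn in auto)
    have "(\<Sum>j<L^(k-1). f j) = (\<Sum>j<L^(k-1). 1 / real L ^ floorlog L j)"
      unfolding f_def by simp
    also have "\<dots> \<le> real (k-1) + 1" by (rule geo_sum[OF L1])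
    finally have p1: "(\<Sum>j<L^(k-1). f j) \<le> real k" using k1 by (simp add: of_nat_diff)
    have "(\<Sum>j\<in>{L^(k-1)..<n}. f j) = real (n - L^(k-1)) * (1 / real n)"
      unfolding f_def by simp
    also have "\<dots> \<le> 1" using n1 by (simp add: of_nat_diff)
    finally show ?thesis unfolding W split using p1 by linarith
  qed
  have "(real L - 1) / (real k + 1) \<le> opt_welfare n v / welfare n v Y"
    using opt Wpos Wle L1 by (intro frac_le) auto
  then have "ereal ((real L - 1) / (real k + 1)) \<le> ratio n v (run (A \<rho>) v)"
    unfolding runv ratio_def using Wpos by simp
  then show ?thesis unfolding distortion_on_def
    by (intro SUP_upper2[of "(\<rho>, v)"]) (use valid same in auto)
qed

lemma three_pow: "1 \<le> k \<Longrightarrow> real k + 2 \<le> 3 ^ k"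
proof (induction k)
  case 0 then show ?case by simp
next
  case (Suc k)
  show ?case
  proof (cases "k = 0")
    case True then show ?thesis by simp
  next
    case False
    then have "real k + 2 \<le> 3 ^ k" using Suc by simp
    moreover have "(1::real) \<le> 3 ^ k" by simp
    ultimately show ?thesis by simp
  qed
qed

lemma dist_ge1:
  assumes "1 \<le> n" "k_query_algorithm n k A"
  shows "1 \<le> distortion_on (same_ranking n) n A"
proof -
  define \<rho> :: "nat \<Rightarrow> nat \<Rightarrow> nat" where "\<rho> = (\<lambda>i r. r)"
  define v :: "nat \<Rightarrow> nat \<Rightarrow> real" where "v = (\<lambda>i j. 0)"
  have valid: "valid_instance n \<rho> v"
    unfolding valid_instance_def is_ranking_profile_def \<rho>_def v_def
    by (simp add: bij_betw_id[unfolded id_def])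
  have same: "same_ranking n \<rho>" unfolding same_ranking_def \<rho>_def by simp
  have "is_matching n (run (A \<rho>) v)" using assms(2) valid unfolding k_query_algorithm_def by blast
  then have "1 \<le> ratio n v (run (A \<rho>) v)" by (rule ratio_ge_1)
  then show ?thesis unfolding distortion_on_def
    by (intro SUP_upper2[of "(\<rho>, v)"]) (use valid same in auto)
qed

theorem theorem5:
  shows "\<exists>c>0. \<forall>n k A. 1 \<le> n \<longrightarrow> 1 \<le> k \<longrightarrow> k_query_algorithm n k A \<longrightarrow>
           ereal (c * real n powr (1 / real k) / real k) \<le> distortion_on (same_ranking n) n A"
proof (intro exI[of _ "1/24"] conjI allI impI)
  show "(0::real) < 1/24" by simp
  fix n k A assume n1: "1 \<le> n" and k1: "1 \<le> k" and alg: "k_query_algorithm n k A"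
  define x where "x = real n powr (1 / real k)"
  define y where "y = (real n / (real k + 2)) powr (1 / real k)"
  have x0: "0 \<le> x" unfolding x_def by simp
  have y_eq: "y = x / (real k + 2) powr (1/real k)" unfolding x_def y_def by (rule powr_divide)
  have "(real k + 2) powr (1/real k) \<le> (3 ^ k) powr (1/real k)"
    using three_pow[OF k1] by (intro powr_mono2) auto
  also have "(3::real) ^ k = 3 powr real k" by (simp add: powr_realpow)
  also have "(3 powr real k) powr (1/real k) = (3::real)" using k1 by (simp add: powr_powr)
  finally have c3: "(real k + 2) powr (1/real k) \<le> 3" .
  have cpos: "0 < (real k + 2) powr (1/real k)" by simp
  have xy: "x \<le> 3 * y" unfolding y_eq using c3 cpos x0
    by (simp add: field_simps mult_left_mono)
  show "ereal (1/24 * real n powr (1 / real k) / real k) \<le> distortion_on (same_ranking n) n A"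
  proof (cases "2 \<le> y")
    case True
    define L where "L = nat \<lfloor>y\<rfloor>"
    have rL: "real L = of_int \<lfloor>y\<rfloor>" unfolding L_def using True by simp
    have L2: "2 \<le> L" unfolding L_def using True by linarith
    have Ly: "real L \<le> y" "y < real L + 1" using rL by linarith+
    have "real L ^ k \<le> y ^ k" using Ly L2 by (intro power_mono) auto
    also have "y ^ k = real n / (real k + 2)" unfolding y_def using k1 n1
      by (simp add: powr_power)
    finally have "(real k + 2) * real L ^ k \<le> real n" by (simp add: field_simps)
    moreover have "real ((k+2) * L^k) = (real k + 2) * real L ^ k" by (simp add: algebra_simps)
    ultimately have "real ((k+2) * L^k) \<le> real n" by linarith
    then have nL: "(k+2) * L^k \<le> n" by linarith
    have core': "ereal ((real L - 1) / (real k + 1)) \<le> distortion_on (same_ranking n) n A"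
      by (rule core[OF k1 L2 nL alg])
    have "y / 4 \<le> real L - 1" using Ly L2 by linarith
    then have "x / 12 \<le> real L - 1" using xy by linarith
    moreover have "real k + 1 \<le> 2 * real k" using k1 by simp
    ultimately have "x / (24 * real k) \<le> (12 * (real L - 1)) / (24 * real k)"
      using k1 by (intro divide_right_mono) auto
    also have "\<dots> = (real L - 1) / (2 * real k)"
      proof -
        have kp: "real k \<noteq> 0" using k1 by simp
        then show ?thesis by (simp add: field_simps)
      qed
    also have "\<dots> \<le> (real L - 1) / (real k + 1)"
      using k1 L2 \<open>real k + 1 \<le> 2 * real k\<close> by (intro divide_left_mono) auto
    finally have "x / (24 * real k) \<le> (real L - 1) / (real k + 1)" .
    then have "1/24 * x / real k \<le> (real L - 1) / (real k + 1)" by simp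
    then show ?thesis using core' unfolding x_def by (meson ereal_less_eq(3) order_trans)
  next
    case False
    then have "x < 6" using xy by linarith
    then have "1/24 * x / real k \<le> 1" using k1 x0 by (simp add: field_simps)
    then have "ereal (1/24 * x / real k) \<le> 1" by simp
    then show ?thesis using dist_ge1[OF n1 alg] unfolding x_def by (meson order_trans)
  qed
qed

end
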